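(* Let $n>1$ and $k\ge 1$ be integers and let $t_1,\ldots,t_k$ be positive divisors of $n$. There exists $\varepsilon<1$ such that the family GRDH with parameters $n,k,t_1,\ldots,t_k$ is $\varepsilon$-almost-$\Delta$-universal if and only if $n$ is odd and $t_1=\cdots=t_k=1$. Moreover, if $n$ is odd and $t_1=\cdots=t_k=1$, then GRDH (i.e., RDH) is $\frac{1}{p-1}$-almost-$\Delta$-universal, where $p$ is the smallest prime divisor of $n$, and this bound is tight: there exist distinct $\mathbf{m},\mathbf{m}'\in\mathbb{Z}_n^k$ and $b\in\mathbb{Z}_n$ with $\Pr_{\mathbf{x}}[\Upsilon_{\mathbf{x}}(\mathbf{m})-\Upsilon_{\mathbf{x}}(\mathbf{m}')=b]=\frac{1}{p-1}$.
   Context: Let $n>1$, $k\ge1$ be integers and $t_1,\ldots,t_k$ positive divisors of $n$. The family GRDH consists of the functions $\Upsilon_{\mathbf{x}}:\mathbb{Z}_n^k\to\mathbb{Z}_n$, $\Upsilon_{\mathbf{x}}(\mathbf{m})=\sum_{i=1}^k m_ix_i \bmod n$, indexed by keys $\mathbf{x}=\langle x_1,\ldots,x_k\rangle\in\mathbb{Z}_n^k$ satisfying $\gcd(x_i,n)=t_i$ for $1\le i\le k$. When $t_1=\cdots=t_k=1$ the family is called RDH. All probabilities are over a key chosen uniformly at random from the set of admissible keys. The family is $\varepsilon$-almost-$\Delta$-universal if for all distinct $\mathbf{m},\mathbf{m}'\in\mathbb{Z}_n^k$ and all $b\in\mathbb{Z}_n$, $\Pr_{\mathbf{x}}[\Upsilon_{\mathbf{x}}(\mathbf{m})-\Upsilon_{\mathbf{x}}(\mathbf{m}')=b]\le\varepsilon$,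 subtraction taken in $\mathbb{Z}_n$. *)

theory Defs
  imports "HOL-Library.FuncSet" "HOL-Computational_Algebra.Primes" Complex_Main
begin

text \<open>Elements of Z_n are represented by integers in {0..<n}; vectors in Z_n^k by
  extensional functions on the index set {0..<k} (value undefined outside).\<close>

definition Zn :: "int \<Rightarrow> int set" where
  "Zn n = {0..<n}"

definition Znk :: "int \<Rightarrow> nat \<Rightarrow> (nat \<Rightarrow> int) set" where
  "Znk n k = PiE {0..<k} (\<lambda>_. Zn n)"

definition grdh_keys :: "int \<Rightarrow> nat \<Rightarrow> (nat \<Rightarrow> int) \<Rightarrow> (nat \<Rightarrow> int) set" where
  "grdh_keys n k t = {x \<in> Znk n k. \<forall>i<k. gcd (x i) n = t i}"

definition grdh_hash :: "int \<Rightarrow> nat \<Rightarrow> (nat \<Rightarrow> int) \<Rightarrow> (nat \<Rightarrow> int) \<Rightarrow> int" where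
  "grdh_hash n k x m = (\<Sum>i<k. m i * x i) mod n"

definition grdh_diff_prob ::
  "int \<Rightarrow> nat \<Rightarrow> (nat \<Rightarrow> int) \<Rightarrow> (nat \<Rightarrow> int) \<Rightarrow> (nat \<Rightarrow> int) \<Rightarrow> int \<Rightarrow> real" where
  "grdh_diff_prob n k t m m' b =
     real (card {x \<in> grdh_keys n k t. (grdh_hash n k x m - grdh_hash n k x m') mod n = b})
     / real (card (grdh_keys n k t))"

definition almost_delta_universal ::
  "int \<Rightarrow> nat \<Rightarrow> (nat \<Rightarrow> int) \<Rightarrow> real \<Rightarrow> bool" where
  "almost_delta_universal n k t \<epsilon> \<longleftrightarrow>
     (\<forall>m\<in>Znk n k. \<forall>m'\<in>Znk n k. \<forall>b\<in>Zn n. m \<noteq> m' \<longrightarrow> grdh_diff_prob n k t m m' b \<le> \<epsilon>)"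

end

theory Submission imports Defs begin

lemma keys_mem:
  "x \<in> grdh_keys n k t \<longleftrightarrow> x \<in> extensional {0..<k} \<and> (\<forall>i<k. 0 \<le> x i \<and> x i < n \<and> gcd (x i) n = t i)"
  unfolding grdh_keys_def Znk_def Zn_def PiE_def by auto

lemma keys_finite: "finite (grdh_keys n k t)"
proof -
  have "grdh_keys n k t \<subseteq> PiE {0..<k} (\<lambda>_. {0..<n})"
    unfolding grdh_keys_def Znk_def Zn_def by auto
  moreover have "finite (PiE {0..<k} (\<lambda>_. {0..<n::int}))" by (rule finite_PiE) auto
  ultimately show ?thesis using finite_subset by blast
qed

lemma diff_eq:
  "(grdh_hash n k x m - grdh_hash n k x m') mod n = (\<Sum>i<k. (m i - m' i) * x i) mod n"
proof -
  have "(grdh_hash n k x m - grdh_hash n k x m') mod n = ((\<Sum>i<k. m i * x i) - (\<Sum>i<k. m' i * x i)) mod n"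
    unfolding grdh_hash_def by (simp add: mod_diff_eq)
  also have "(\<Sum>i<k. m i * x i) - (\<Sum>i<k. m' i * x i) = (\<Sum>i<k. (m i - m' i) * x i)"
    by (simp add: sum_subtractf algebra_simps)
  finally show ?thesis .
qed

lemma prob_eq:
  "grdh_diff_prob n k t m m' b = real (card {x \<in> grdh_keys n k t. (\<Sum>i<k. (m i - m' i) * x i) mod n = b}) / real (card (grdh_keys n k t))"
  unfolding grdh_diff_prob_def diff_eq ..

lemma small_coprime:
  fixes w n p :: int
  assumes "n \<noteq> 0" "\<forall>q. prime q \<and> q dvd n \<longrightarrow> p \<le> q" "0 < \<bar>w\<bar>" "\<bar>w\<bar> < p"
  shows "coprime w n"
proof (rule ccontr)
  assume nc: "\<not> coprime w n"
  have "gcd w n \<noteq> 0" using assms(1) by simp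
  moreover have "\<not> is_unit (gcd w n)" using nc by (simp add: coprime_iff_gcd_eq_1)
  ultimately obtain q where q: "q dvd gcd w n" "prime q" using prime_divisor_exists by blast
  then have "q dvd w" "q dvd n" by auto
  then have "p \<le> q" using assms(2) q by blast
  moreover have "q \<le> \<bar>w\<bar>" using \<open>q dvd w\<close> assms(3) by (simp add: zdvd_imp_le)
  ultimately show False using assms(4) by simp
qed

lemma count_bound:
  fixes n p :: int and D :: "nat \<Rightarrow> int"
  assumes n1: "n > 1" and pmin: "\<forall>q. prime q \<and> q dvd n \<longrightarrow> p \<le> q"
    and t1: "\<forall>i<k. t i = 1" and j: "j < k" and nd: "\<not> n dvd D j"
  shows "nat (p - 1) * card {x \<in> grdh_keys n k t. (\<Sum>i<k. D i * x i) mod n = b} \<le> card (grdh_keys n k t)"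
proof -
  define K where "K = grdh_keys n k t"
  define E where "E = {x \<in> K. (\<Sum>i<k. D i * x i) mod n = b}"
  define f where "f = (\<lambda>(u::int, x::nat \<Rightarrow> int). x(j := (u * x j) mod n))"
  have ucop: "coprime u n" if "u \<in> {1..p-1}" for u
  proof -
    have "0 < \<bar>u\<bar>" "\<bar>u\<bar> < p" using that by auto
    then show ?thesis using small_coprime[OF _ pmin, of u] n1 by simp
  qed
  have img: "f ` ({1..p-1} \<times> E) \<subseteq> K"
  proof
    fix y assume "y \<in> f ` ({1..p-1} \<times> E)"
    then obtain u x where u: "u \<in> {1..p-1}" and x: "x \<in> E" and y: "y = x(j := (u * x j) mod n)"
      unfolding f_def by auto
    have xK: "x \<in> K" using x E_def by auto
    have cx: "coprime (x j) n" using xK j t1 unfolding K_def keys_mem by (auto simp: coprime_iff_gcd_eq_1)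
    have "coprime (u * x j) n" using cx ucop[OF u] by simp
    then have "gcd ((u * x j) mod n) n = 1"
      using n1 by (simp add: gcd_mod_left coprime_iff_gcd_eq_1[symmetric])
    then show "y \<in> K" using xK n1 t1 j unfolding K_def keys_mem y extensional_def by auto
  qed
  have inj: "inj_on f ({1..p-1} \<times> E)"
  proof (rule inj_onI, clarify)
    fix u x u' x'
    assume u: "u \<in> {1..p-1}" and x: "x \<in> E" and u': "u' \<in> {1..p-1}" and x': "x' \<in> E"
      and eq: "f (u, x) = f (u', x')"
    have xK: "x \<in> K" and x'K: "x' \<in> K" using x x' E_def by auto
    have oth: "x i = x' i" if "i \<noteq> j" for i
      using fun_cong[OF eq, of i] that unfolding f_def by auto
    have ej: "(u * x j) mod n = (u' * x' j) mod n"
      using fun_cong[OF eq, of j] unfolding f_def by auto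
    have cx: "coprime (x j) n" using xK j t1 unfolding K_def keys_mem by (auto simp: coprime_iff_gcd_eq_1)
    have split: "(\<Sum>i<k. D i * y i) = D j * y j + (\<Sum>i\<in>{..<k}-{j}. D i * y i)" for y :: "nat \<Rightarrow> int"
      using j by (simp add: sum.remove)
    have same: "(\<Sum>i\<in>{..<k}-{j}. D i * x i) = (\<Sum>i\<in>{..<k}-{j}. D i * x' i)"
      using oth by (intro sum.cong) auto
    have "(\<Sum>i<k. D i * x i) mod n = (\<Sum>i<k. D i * x' i) mod n" using x x' E_def by auto
    then have "(D j * x j + (\<Sum>i\<in>{..<k}-{j}. D i * x' i) - (\<Sum>i\<in>{..<k}-{j}. D i * x' i)) mod n
       = (D j * x' j + (\<Sum>i\<in>{..<k}-{j}. D i * x' i) - (\<Sum>i\<in>{..<k}-{j}. D i * x' i)) mod n"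
      unfolding split same by (rule mod_diff_cong) simp
    then have "(D j * x j) mod n = (D j * x' j) mod n" by simp
    then have c1: "n dvd D j * x j - D j * x' j" by (simp add: mod_eq_dvd_iff)
    have c2: "n dvd u * x j - u' * x' j" using ej by (simp add: mod_eq_dvd_iff)
    have "n dvd (u - u') * D j * x j"
    proof -
      have eqq: "(u - u') * D j * x j = D j * (u * x j - u' * x' j) + u' * (D j * x' j - D j * x j)"
        by (simp add: algebra_simps)
      have d1: "n dvd D j * (u * x j - u' * x' j)" using c2 by simp
      have d2: "n dvd u' * (D j * x' j - D j * x j)"
      proof -
        have "n dvd D j * x' j - D j * x j" using c1 by (simp only: dvd_diff_commute)
        then show ?thesis by (rule dvd_mult)
      qed
      show ?thesis unfolding eqq by (rule dvd_add[OF d1 d2])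
    qed
    moreover have cx': "coprime n (x j)" using cx by (simp add: coprime_commute)
    ultimately have "n dvd (u - u') * D j" using coprime_dvd_mult_left_iff[OF cx'] by simp
    then have uu: "u = u'"
    proof -
      assume h: "n dvd (u - u') * D j"
      show "u = u'"
      proof (rule ccontr)
        assume "u \<noteq> u'"
        then have "coprime (u - u') n"
        proof -
          have "0 < \<bar>u - u'\<bar>" "\<bar>u - u'\<bar> < p" using u u' \<open>u \<noteq> u'\<close> by auto
          then show ?thesis using small_coprime[OF _ pmin, of "u - u'"] n1 by simp
        qed
        then have "coprime n (u - u')" by (simp add: coprime_commute)
        then show False using h nd by (simp add: coprime_dvd_mult_right_iff)
      qed
    qed
    then have "n dvd u * (x j - x' j)" using c2 by (simp add: algebra_simps)
    moreover have "coprime n u" using ucop[OF u] by (simp add: coprime_commute)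
    ultimately have dd: "n dvd x j - x' j" by (simp add: coprime_dvd_mult_right_iff)
    have e1: "x j mod n = x' j mod n" using dd by (simp add: mod_eq_dvd_iff)
    have b: "0 \<le> x j" "x j < n" "0 \<le> x' j" "x' j < n"
      using xK x'K j unfolding K_def keys_mem by auto
    have m1: "x j mod n = x j" "x' j mod n = x' j" using b by (simp_all add: mod_pos_pos_trivial)
    have xj: "x j = x' j" using e1 m1 by linarith
    have "x = x'"
    proof
      fix i show "x i = x' i"
      proof (cases "i = j")
        case True then show ?thesis using xj by simp
      next
        case False then show ?thesis using oth by blast
      qed
    qed
    then show "u = u' \<and> x = x'" using uu by simp
  qed
  have "card ({1..p-1} \<times> E) \<le> card K"
    using card_inj_on_le[OF inj img] K_def keys_finite by auto
  moreover have "card ({1..p-1} \<times> E) = nat (p - 1) * card E"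
    by (simp add: card_cartesian_product)
  ultimately show ?thesis unfolding E_def K_def by simp
qed

lemma min_prime:
  fixes n :: int assumes n1: "n > 1"
  defines "p \<equiv> Min {q::int. prime q \<and> q dvd n}"
  shows "prime p" "p dvd n" "\<forall>q. prime q \<and> q dvd n \<longrightarrow> p \<le> q"
proof -
  let ?S = "{q::int. prime q \<and> q dvd n}"
  have fin: "finite ?S"
  proof (rule finite_subset)
    show "?S \<subseteq> {0..n}" using n1 by (auto simp: zdvd_imp_le prime_ge_0_int)
  qed simp
  have "n \<noteq> 0" "\<not> is_unit n" using n1 by auto
  then obtain q where "q dvd n" "prime q" using prime_divisor_exists by blast
  then have ne: "?S \<noteq> {}" by auto
  have "p \<in> ?S" unfolding p_def using Min_in[OF fin ne] .
  then show "prime p" "p dvd n" by auto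
  show "\<forall>q. prime q \<and> q dvd n \<longrightarrow> p \<le> q" unfolding p_def using Min_le[OF fin] by auto
qed

lemma keys_nonempty:
  fixes n :: int
  assumes n1: "n > 1" and tdv: "\<forall>i<k. t i > 0 \<and> t i dvd n"
  shows "card (grdh_keys n k t) > 0"
proof -
  define w where "w = (\<lambda>i\<in>{0..<k}. if t i = n then 0 else t i)"
  have "w \<in> grdh_keys n k t" unfolding keys_mem
  proof (intro conjI allI impI)
    show "w \<in> extensional {0..<k}" unfolding w_def by simp
  next
    fix i assume i: "i < k"
    have tle: "t i \<le> n" using tdv i n1 by (simp add: zdvd_imp_le)
    show "0 \<le> w i" using tdv i unfolding w_def by auto
    show "w i < n" using tle i n1 unfolding w_def by auto
    show "gcd (w i) n = t i"
    proof (cases "t i = n")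
      case True then show ?thesis using i n1 unfolding w_def by simp
    next
      case False
      have "t i > 0" "t i dvd n" using tdv i by auto
      then have "gcd (t i) n = t i" using gcd_proj1_if_dvd[of "t i" n] by simp
      then show ?thesis using False i unfolding w_def by simp
    qed
  qed
  then show ?thesis using keys_finite card_gt_0_iff by blast
qed

lemma sum_single:
  fixes j k :: nat and c :: int and x :: "nat \<Rightarrow> int"
  assumes "j < k"
  shows "(\<Sum>i<k. ((\<lambda>i\<in>{0..<k}. if i = j then c else 0) i - (\<lambda>i\<in>{0..<k}. (0::int)) i) * x i) = c * x j"
proof -
  have "(\<Sum>i<k. ((\<lambda>i\<in>{0..<k}. if i = j then c else 0) i - (\<lambda>i\<in>{0..<k}. (0::int)) i) * x i)
      = (\<Sum>i<k. (if i = j then c * x i else 0))"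
    by (intro sum.cong) (simp_all add: restrict_def)
  also have "\<dots> = c * x j" using assms by (simp add: sum.delta)
  finally show ?thesis .
qed

lemma single_mem:
  fixes j k :: nat and c n :: int
  assumes "0 \<le> c" "c < n"
  shows "(\<lambda>i\<in>{0..<k}. if i = j then c else 0) \<in> Znk n k"
  using assms unfolding Znk_def Zn_def by auto

lemma zero_mem:
  assumes "0 < n"
  shows "(\<lambda>i\<in>{0..<k}. (0::int)) \<in> Znk n k"
  using assms unfolding Znk_def Zn_def by auto

lemma prob_one:
  assumes "card (grdh_keys n k t) > 0"
    and "\<forall>x\<in>grdh_keys n k t. (\<Sum>i<k. (m i - m' i) * x i) mod n = b"
  shows "grdh_diff_prob n k t m m' b = 1"
proof -
  have "{x \<in> grdh_keys n k t. (\<Sum>i<k. (m i - m' i) * x i) mod n = b} = grdh_keys n k t"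
    using assms(2) by auto
  then show ?thesis unfolding prob_eq using assms(1) by simp
qed

lemma bad_case:
  fixes n :: int
  assumes n1: "n > 1" and k1: "k \<ge> 1" and tdv: "\<forall>i<k. t i > 0 \<and> t i dvd n"
    and bad: "\<not> (odd n \<and> (\<forall>i<k. t i = 1))"
  shows "\<exists>m\<in>Znk n k. \<exists>m'\<in>Znk n k. \<exists>b\<in>Zn n. m \<noteq> m' \<and> grdh_diff_prob n k t m m' b = 1"
proof -
  have cpos: "card (grdh_keys n k t) > 0" using keys_nonempty[OF n1 tdv] .
  define m' where "m' = (\<lambda>i\<in>{0..<k}. (0::int))"
  have m'Z: "m' \<in> Znk n k" unfolding m'_def using n1 zero_mem by simp
  show ?thesis
  proof (cases "\<exists>j<k. t j \<noteq> 1")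
    case True
    then obtain j where j: "j < k" "t j \<noteq> 1" by blast
    define d where "d = t j"
    have d1: "d > 1" "d dvd n" using tdv j unfolding d_def by auto
    define c where "c = n div d"
    have cn: "n = d * c" using d1 unfolding c_def by simp
    have c0: "0 < c" using n1 d1 cn zero_less_mult_pos[of d c] by simp
    have cl: "c < n" using n1 d1 unfolding c_def by (simp add: int_div_less_self)
    define m where "m = (\<lambda>i\<in>{0..<k}. if i = j then c else 0)"
    have mZ: "m \<in> Znk n k" unfolding m_def using single_mem c0 cl by simp
    have "m j = c" "m' j = 0" using j unfolding m_def m'_def by simp_all
    then have neq: "m \<noteq> m'" using c0 by auto
    have "\<forall>x\<in>grdh_keys n k t. (\<Sum>i<k. (m i - m' i) * x i) mod n = 0"
    proof
      fix x assume x: "x \<in> grdh_keys n k t"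
      have "gcd (x j) n = d" using x j unfolding keys_mem d_def by auto
      then have "d dvd x j" using gcd_dvd1[of "x j" n] by simp
      then obtain a where a: "x j = d * a" by blast
      have "(\<Sum>i<k. (m i - m' i) * x i) = c * x j" unfolding m_def m'_def using sum_single[OF j(1)] .
      also have "\<dots> = n * a" using a cn by simp
      finally show "(\<Sum>i<k. (m i - m' i) * x i) mod n = 0" by simp
    qed
    then have "grdh_diff_prob n k t m m' 0 = 1" using prob_one[OF cpos] by blast
    moreover have "(0::int) \<in> Zn n" using n1 unfolding Zn_def by simp
    ultimately show ?thesis using mZ m'Z neq by blast
  next
    case False
    then have t1: "\<forall>i<k. t i = 1" by blast
    then have ev: "even n" using bad by blast
    have j: "0 < k" using k1 by simp
    define c where "c = n div 2"
    have cn: "n = 2 * c" using ev unfolding c_def by simp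
    have c0: "0 < c" "c < n" using n1 cn by auto
    define m where "m = (\<lambda>i\<in>{0..<k}. if i = 0 then c else 0)"
    have mZ: "m \<in> Znk n k" unfolding m_def using single_mem c0 by simp
    have "m 0 = c" "m' 0 = 0" using j unfolding m_def m'_def by simp_all
    then have neq: "m \<noteq> m'" using c0 by auto
    have "\<forall>x\<in>grdh_keys n k t. (\<Sum>i<k. (m i - m' i) * x i) mod n = c"
    proof
      fix x assume x: "x \<in> grdh_keys n k t"
      have "gcd (x 0) n = 1" using x j t1 unfolding keys_mem by auto
      have "odd (x 0)"
      proof
        assume "even (x 0)"
        then have "2 dvd gcd (x 0) n" using ev by simp
        then show False using \<open>gcd (x 0) n = 1\<close> by simp
      qed
      then obtain a where a: "x 0 = 2 * a + 1" by (auto elim: oddE)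
      have "(\<Sum>i<k. (m i - m' i) * x i) = c * x 0" unfolding m_def m'_def using sum_single[OF j] .
      also have "\<dots> = c + n * a" using a cn by (simp add: algebra_simps)
      finally show "(\<Sum>i<k. (m i - m' i) * x i) mod n = c" using c0 by simp
    qed
    then have "grdh_diff_prob n k t m m' c = 1" using prob_one[OF cpos] by blast
    moreover have "c \<in> Zn n" using c0 unfolding Zn_def by simp
    ultimately show ?thesis using mZ m'Z neq by blast
  qed
qed

lemma upper:
  fixes n p :: int
  assumes n1: "n > 1" and pp: "prime p" and pmin: "\<forall>q. prime q \<and> q dvd n \<longrightarrow> p \<le> q"
    and t1: "\<forall>i<k. t i = 1" and cpos: "card (grdh_keys n k t) > 0"
    and m: "m \<in> Znk n k" and m': "m' \<in> Znk n k" and neq: "m \<noteq> m'"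
  shows "grdh_diff_prob n k t m m' b \<le> 1 / real_of_int (p - 1)"
proof -
  have "\<exists>j<k. m j \<noteq> m' j"
  proof (rule ccontr)
    assume "\<not> (\<exists>j<k. m j \<noteq> m' j)"
    then have "\<forall>i<k. m i = m' i" by blast
    then have "m = m'" using m m' unfolding Znk_def by (intro PiE_ext[of m "{0..<k}"]) auto
    then show False using neq by simp
  qed
  then obtain j where j: "j < k" "m j \<noteq> m' j" by blast
  have b: "0 \<le> m j" "m j < n" "0 \<le> m' j" "m' j < n" using m m' j unfolding Znk_def Zn_def by auto
  have nd: "\<not> n dvd (m j - m' j)"
  proof
    assume "n dvd (m j - m' j)"
    then have "m j mod n = m' j mod n" by (simp add: mod_eq_dvd_iff)
    moreover have "m j mod n = m j" "m' j mod n = m' j" using b by (simp_all add: mod_pos_pos_trivial)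
    ultimately show False using j(2) by linarith
  qed
  have cb: "nat (p - 1) * card {x \<in> grdh_keys n k t. (\<Sum>i<k. (m i - m' i) * x i) mod n = b} \<le> card (grdh_keys n k t)"
    using count_bound[OF n1 pmin t1 j(1), of "\<lambda>i. m i - m' i"] nd by simp
  define e where "e = card {x \<in> grdh_keys n k t. (\<Sum>i<k. (m i - m' i) * x i) mod n = b}"
  define N where "N = card (grdh_keys n k t)"
  have p2: "p \<ge> 2" using pp by (simp add: prime_ge_2_int)
  have "real_of_int (p - 1) * real e \<le> real N"
  proof -
    have "real (nat (p - 1) * e) \<le> real N" using cb unfolding e_def N_def by linarith
    then show ?thesis using p2 by simp
  qed
  moreover have "real N > 0" using cpos N_def by simp
  moreover have "real_of_int (p - 1) > 0" using p2 by simp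
  ultimately have "real e / real N \<le> 1 / real_of_int (p - 1)"
    by (simp add: field_simps)
  then show ?thesis unfolding prob_eq e_def N_def .
qed

lemma tight:
  fixes n p :: int
  assumes n1: "n > 1" and pp: "prime p" and pdvd: "p dvd n" and pmin: "\<forall>q. prime q \<and> q dvd n \<longrightarrow> p \<le> q"
    and t1: "\<forall>i<k. t i = 1" and k1: "k \<ge> 1" and cpos: "card (grdh_keys n k t) > 0"
  shows "\<exists>m\<in>Znk n k. \<exists>m'\<in>Znk n k. \<exists>b\<in>Zn n. m \<noteq> m' \<and> grdh_diff_prob n k t m m' b = 1 / real_of_int (p - 1)"
proof -
  have p2: "p \<ge> 2" using pp by (simp add: prime_ge_2_int)
  define s where "s = n div p"
  have ns: "n = s * p" using pdvd unfolding s_def by simp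
  have s0: "0 < s" using n1 p2 ns zero_less_mult_pos2[of s p] by simp
  have sl: "s < n" using n1 p2 unfolding s_def by (simp add: int_div_less_self)
  have j: "0 < k" using k1 by simp
  define m where "m = (\<lambda>i\<in>{0..<k}. if i = 0 then s else 0)"
  define m' where "m' = (\<lambda>i\<in>{0..<k}. (0::int))"
  have mZ: "m \<in> Znk n k" unfolding m_def using single_mem s0 sl by simp
  have m'Z: "m' \<in> Znk n k" unfolding m'_def using n1 zero_mem by simp
  have "m 0 = s" "m' 0 = 0" using j unfolding m_def m'_def by simp_all
  then have neq: "m \<noteq> m'" using s0 by auto
  define K where "K = grdh_keys n k t"
  define F where "F r = {x \<in> K. (\<Sum>i<k. (m i - m' i) * x i) mod n = s * r}" for r
  have sumx: "(\<Sum>i<k. (m i - m' i) * x i) = s * x 0" for x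
    unfolding m_def m'_def using sum_single[OF j] .
  have key: "(\<Sum>i<k. (m i - m' i) * x i) mod n = s * (x 0 mod p)" for x
    unfolding sumx ns by (rule mod_mult_mult1)
  have rng: "x 0 mod p \<in> {1..p-1}" if x: "x \<in> K" for x
  proof -
    have g: "gcd (x 0) n = 1" using x j t1 unfolding K_def keys_mem by auto
    have "x 0 mod p \<noteq> 0"
    proof
      assume "x 0 mod p = 0"
      then have "p dvd x 0" by (simp add: dvd_eq_mod_eq_0)
      then have "p dvd gcd (x 0) n" using pdvd by simp
      then show False using g p2 by simp
    qed
    moreover have "0 \<le> x 0 mod p" "x 0 mod p < p" using p2 by simp_all
    ultimately show ?thesis by simp
  qed
  have Kun: "K = (\<Union>r\<in>{1..p-1}. F r)"
  proof
    show "K \<subseteq> (\<Union>r\<in>{1..p-1}. F r)"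
    proof
      fix x assume x: "x \<in> K"
      then have "x \<in> F (x 0 mod p)" unfolding F_def using key by simp
      then show "x \<in> (\<Union>r\<in>{1..p-1}. F r)" using rng[OF x] by blast
    qed
  qed (auto simp: F_def)
  have finF: "finite (F r)" for r unfolding F_def K_def using keys_finite by simp
  have disj: "\<forall>r\<in>{1..p-1}. \<forall>r'\<in>{1..p-1}. r \<noteq> r' \<longrightarrow> F r \<inter> F r' = {}"
    unfolding F_def using s0 by auto
  have cardK: "card K = (\<Sum>r\<in>{1..p-1}. card (F r))"
    unfolding Kun by (rule card_UN_disjoint) (use finF disj in auto)
  have nd: "\<not> n dvd (m 0 - m' 0)"
  proof
    assume "n dvd (m 0 - m' 0)"
    then have "n dvd s" using \<open>m 0 = s\<close> \<open>m' 0 = 0\<close> by simp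
    then show False using s0 sl by (simp add: zdvd_not_zless)
  qed
  have bnd: "nat (p - 1) * card (F r) \<le> card K" for r
    unfolding F_def K_def using count_bound[OF n1 pmin t1 j, of "\<lambda>i. m i - m' i"] nd by simp
  define P where "P = nat (p - 1)"
  have cardI: "card {1..p-1} = P" unfolding P_def by simp
  have eq: "P * card (F 1) = card K"
  proof (rule ccontr)
    assume "P * card (F 1) \<noteq> card K"
    then have lt: "P * card (F 1) < card K" using bnd P_def by (simp add: order_le_neq_trans)
    have "(\<Sum>r\<in>{1..p-1}. P * card (F r)) < (\<Sum>r\<in>{1..p-1}. card K)"
      by (rule sum_strict_mono_ex1) (use bnd lt p2 P_def in auto)
    also have "\<dots> = P * card K" using cardI by simp
    also have "\<dots> = (\<Sum>r\<in>{1..p-1}. P * card (F r))" unfolding cardK by (simp add: sum_distrib_left)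
    finally show False by simp
  qed
  have "grdh_diff_prob n k t m m' s = real (card (F 1)) / real (card K)"
    unfolding prob_eq F_def K_def by simp
  also have "\<dots> = 1 / real_of_int (p - 1)"
  proof -
    have "real (card K) = real P * real (card (F 1))" using eq by (metis of_nat_mult)
    moreover have "real P = real_of_int (p - 1)" unfolding P_def using p2 by simp
    ultimately have kk: "real (card K) = real_of_int (p - 1) * real (card (F 1))" by simp
    have "card (F 1) > 0" using cpos eq K_def by (metis mult_0_right neq0_conv)
    then have e0: "real (card (F 1)) \<noteq> 0" by simp
    have p0: "real_of_int (p - 1) \<noteq> 0" using p2 by simp
    show ?thesis unfolding kk using e0 p0 by (simp add: field_simps)
  qed
  finally have "grdh_diff_prob n k t m m' s = 1 / real_of_int (p - 1)" .
  moreover have "s \<in> Zn n" using s0 sl unfolding Zn_def by simp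
  ultimately show ?thesis using mZ m'Z neq by blast
qed

theorem mainTheorem4:
  fixes n :: int and k :: nat and t :: "nat \<Rightarrow> int"
  assumes "n > 1" and "k \<ge> 1"
    and "\<forall>i<k. t i > 0 \<and> t i dvd n"
  shows "((\<exists>\<epsilon><1. almost_delta_universal n k t \<epsilon>) \<longleftrightarrow> (odd n \<and> (\<forall>i<k. t i = 1)))
       \<and> (odd n \<and> (\<forall>i<k. t i = 1) \<longrightarrow>
            (let p = Min {q::int. prime q \<and> q dvd n} in
              almost_delta_universal n k t (1 / real_of_int (p - 1)) \<and>
              (\<exists>m\<in>Znk n k. \<exists>m'\<in>Znk n k. \<exists>b\<in>Zn n. m \<noteq> m' \<and>
                  grdh_diff_prob n k t m m' b = 1 / real_of_int (p - 1))))"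
proof -
  note n1 = assms(1) and k1 = assms(2) and tdv = assms(3)
  define p where "p = Min {q::int. prime q \<and> q dvd n}"
  have pp: "prime p" and pdvd: "p dvd n" and pmin: "\<forall>q. prime q \<and> q dvd n \<longrightarrow> p \<le> q"
    using min_prime[OF n1] unfolding p_def by auto
  have cpos: "card (grdh_keys n k t) > 0" using keys_nonempty[OF n1 tdv] .
  have univ: "almost_delta_universal n k t (1 / real_of_int (p - 1))" if t1: "\<forall>i<k. t i = 1"
    unfolding almost_delta_universal_def using upper[OF n1 pp pmin t1 cpos] by blast
  have p3: "p \<ge> 3" if "odd n"
  proof -
    have "p \<noteq> 2" using pdvd that by auto
    moreover have "p \<ge> 2" using pp by (simp add: prime_ge_2_int)
    ultimately show ?thesis by simp
  qed
  have part1: "(\<exists>\<epsilon><1. almost_delta_universal n k t \<epsilon>) \<longleftrightarrow> (odd n \<and> (\<forall>i<k. t i = 1))"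
  proof
    assume "\<exists>\<epsilon><1. almost_delta_universal n k t \<epsilon>"
    then obtain \<epsilon> where e1: "\<epsilon> < 1" and u: "almost_delta_universal n k t \<epsilon>" by blast
    show "odd n \<and> (\<forall>i<k. t i = 1)"
    proof (rule ccontr)
      assume "\<not> (odd n \<and> (\<forall>i<k. t i = 1))"
      then obtain m m' b where "m \<in> Znk n k" "m' \<in> Znk n k" "b \<in> Zn n" "m \<noteq> m'"
        "grdh_diff_prob n k t m m' b = 1"
        using bad_case[OF n1 k1 tdv] by blast
      then have "1 \<le> \<epsilon>" using u unfolding almost_delta_universal_def by metis
      then show False using e1 by simp
    qed
  next
    assume h: "odd n \<and> (\<forall>i<k. t i = 1)"
    have "1 / real_of_int (p - 1) < 1" using p3 h by simp
    then show "\<exists>\<epsilon><1. almost_delta_universal n k t \<epsilon>" using univ h by blast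
  qed
  have part2: "odd n \<and> (\<forall>i<k. t i = 1) \<longrightarrow>
      almost_delta_universal n k t (1 / real_of_int (p - 1)) \<and>
      (\<exists>m\<in>Znk n k. \<exists>m'\<in>Znk n k. \<exists>b\<in>Zn n. m \<noteq> m' \<and>
          grdh_diff_prob n k t m m' b = 1 / real_of_int (p - 1))"
    using univ tight[OF n1 pp pdvd pmin _ k1 cpos] by blast
  show ?thesis unfolding Let_def p_def[symmetric] using part1 part2 by blast
qed

end
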